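(* Let $q\ge 7$ and $s\in[1,7]$ be integers, $C$ a finite set with $|C|=2q+s$, and $M\in\mathcal M(6,q,C)$. Let $\{i,k\}\subseteq\{1,\dots,6\}$, $i\ne k$, with $r(i,k)\ge 1$, and let $B\subseteq\{1,\dots,6\}$ with $3\le|B|\le 4$ and $B\cap\{i,k\}=\emptyset$. Then $r(B)\le r^*(B)\le 2|B|$.
   Context: $\mathcal M(6,q,C)$ is the set of $6\times q$ matrices $M$ with entries from $C$ such that each row has $q$ pairwise distinct entries, each column has $6$ pairwise distinct entries, and every pair of distinct colours of $C$ appears together in some row or some column of $M$. The frequency of a colour is the number of entries of $M$ equal to it. For $A\subseteq\{1,\dots,6\}$ with $|A|\ge 2$, $\operatorname{ro}(A)$ denotes the set of colours of frequency exactly $|A|$ that appear in every row indexed by an element of $A$, and $r(A)=|\operatorname{ro}(A)|$; $r(i,k)=r(\{i,k\})$. For $B\subseteq\{1,\dots,6\}$ with $3\le|B|\le4$, $\operatorname{ro}^*(B)=\bigcup\{\operatorname{ro}(A): A\subseteq B,\ 2\le|A|\le|B|\}$ and $r^*(B)=|\operatorname{ro}^*(B)|$. *)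

theory Defs
  imports Main
begin

definition in_M6 :: "nat \<Rightarrow> 'c set \<Rightarrow> (nat \<Rightarrow> nat \<Rightarrow> 'c) \<Rightarrow> bool" where
  "in_M6 q C M \<longleftrightarrow>
     (\<forall>i\<in>{1..6}. \<forall>j\<in>{1..q}. M i j \<in> C) \<and>
     (\<forall>i\<in>{1..6}. inj_on (M i) {1..q}) \<and>
     (\<forall>j\<in>{1..q}. inj_on (\<lambda>i. M i j) {1..6}) \<and>
     (\<forall>a\<in>C. \<forall>b\<in>C. a \<noteq> b \<longrightarrow>
        (\<exists>i\<in>{1..6}. a \<in> M i ` {1..q} \<and> b \<in> M i ` {1..q}) \<or>
        (\<exists>j\<in>{1..q}. a \<in> (\<lambda>i. M i j) ` {1..6} \<and> b \<in> (\<lambda>i. M i j) ` {1..6}))"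

definition freq :: "nat \<Rightarrow> (nat \<Rightarrow> nat \<Rightarrow> 'c) \<Rightarrow> 'c \<Rightarrow> nat" where
  "freq q M c = card {(i, j). i \<in> {1..6} \<and> j \<in> {1..q} \<and> M i j = c}"

definition ro :: "nat \<Rightarrow> 'c set \<Rightarrow> (nat \<Rightarrow> nat \<Rightarrow> 'c) \<Rightarrow> nat set \<Rightarrow> 'c set" where
  "ro q C M A = {c \<in> C. freq q M c = card A \<and> (\<forall>i\<in>A. c \<in> M i ` {1..q})}"

definition r :: "nat \<Rightarrow> 'c set \<Rightarrow> (nat \<Rightarrow> nat \<Rightarrow> 'c) \<Rightarrow> nat set \<Rightarrow> nat" where
  "r q C M A = card (ro q C M A)"

definition ro_star :: "nat \<Rightarrow> 'c set \<Rightarrow> (nat \<Rightarrow> nat \<Rightarrow> 'c) \<Rightarrow> nat set \<Rightarrow> 'c set" where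
  "ro_star q C M B = \<Union>{ro q C M A | A. A \<subseteq> B \<and> 2 \<le> card A \<and> card A \<le> card B}"

definition r_star :: "nat \<Rightarrow> 'c set \<Rightarrow> (nat \<Rightarrow> nat \<Rightarrow> 'c) \<Rightarrow> nat set \<Rightarrow> nat" where
  "r_star q C M B = card (ro_star q C M B)"

end

theory Submission
  imports Defs
begin

lemma occ_rows:
  assumes "in_M6 q C M" "A \<subseteq> {1..6}" "d \<in> ro q C M A" "m \<in> {1..6}" "j \<in> {1..q}" "M m j = d"
  shows "m \<in> A"
proof -
  let ?S = "{(i, j). i \<in> {1..6} \<and> j \<in> {1..q} \<and> M i j = d}"
  have fS: "finite ?S" by (rule finite_subset[of _ "{1..6}\<times>{1..q}"]) blast+
  from assms(3) have cS: "card ?S = card A" and occ: "\<forall>i\<in>A. d \<in> M i ` {1..q}"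
    unfolding ro_def freq_def by simp_all
  have "\<forall>i\<in>A. \<exists>j. j \<in> {1..q} \<and> M i j = d" using occ by (simp add: image_iff Bex_def) (metis)
  from bchoice[OF this] obtain g where g: "\<forall>i\<in>A. g i \<in> {1..q} \<and> M i (g i) = d" by blast
  let ?T = "(\<lambda>i. (i, g i)) ` A"
  have TS: "?T \<subseteq> ?S" using g assms(2) by auto
  have "card ?T = card A" by (rule card_image) (simp add: inj_on_def)
  hence "?T = ?S" using card_subset_eq[OF fS TS] cS by simp
  moreover have "(m,j) \<in> ?S" using assms(4,5,6) by blast
  ultimately show ?thesis by blast
qed

theorem claim3:
  fixes q s :: nat and C :: "'c set" and M :: "nat \<Rightarrow> nat \<Rightarrow> 'c"
    and i k :: nat and B :: "nat set"
  assumes "q \<ge> 7" and "1 \<le> s" and "s \<le> 7"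
    and "finite C" and "card C = 2 * q + s"
    and "in_M6 q C M"
    and "i \<in> {1..6}" and "k \<in> {1..6}" and "i \<noteq> k"
    and "r q C M {i, k} \<ge> 1"
    and "B \<subseteq> {1..6}" and "3 \<le> card B" and "card B \<le> 4"
    and "B \<inter> {i, k} = {}"
  shows "r q C M B \<le> r_star q C M B \<and> r_star q C M B \<le> 2 * card B"
proof
  have fin: "finite (ro_star q C M B)"
    by (rule finite_subset[OF _ assms(4)]) (auto simp: ro_star_def ro_def)
  have "ro q C M B \<subseteq> ro_star q C M B"
  proof
    fix x assume "x \<in> ro q C M B"
    moreover have "B \<subseteq> B \<and> 2 \<le> card B \<and> card B \<le> card B" using assms(12) by simp
    ultimately show "x \<in> ro_star q C M B" unfolding ro_star_def by blast
  qed
  then show "r q C M B \<le> r_star q C M B"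
    unfolding r_def r_star_def using fin card_mono by blast
  have fB: "finite B" using assms(11) finite_subset by blast
  have M6: "(\<forall>i\<in>{1..6}. inj_on (M i) {1..q})"
     "(\<forall>a\<in>C. \<forall>b\<in>C. a \<noteq> b \<longrightarrow>
        (\<exists>i\<in>{1..6}. a \<in> M i ` {1..q} \<and> b \<in> M i ` {1..q}) \<or>
        (\<exists>j\<in>{1..q}. a \<in> (\<lambda>i. M i j) ` {1..6} \<and> b \<in> (\<lambda>i. M i j) ` {1..6}))"
    using assms(6) unfolding in_M6_def by blast+
  have "ro q C M {i,k} \<noteq> {}" using assms(10) unfolding r_def by (metis card.empty not_one_le_zero)
  then obtain c where c: "c \<in> ro q C M {i,k}" by blast
  have ikS: "{i,k} \<subseteq> {1..6}" using assms(7,8) by auto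
  have cC: "c \<in> C" using c by (simp add: ro_def)
  obtain ji where ji: "ji \<in> {1..q}" "M i ji = c" using c by (auto simp: ro_def)
  obtain jk where jk: "jk \<in> {1..q}" "M k jk = c" using c by (auto simp: ro_def)
  have sub: "ro_star q C M B \<subseteq> (\<lambda>(p,j). M p j) ` (B \<times> {ji,jk})"
  proof
    fix d assume "d \<in> ro_star q C M B"
    then obtain A where A: "A \<subseteq> B" "2 \<le> card A" "d \<in> ro q C M A"
      unfolding ro_star_def by blast
    have AS: "A \<subseteq> {1..6}" using A(1) assms(11) by auto
    have dC: "d \<in> C" using A(3) by (simp add: ro_def)
    have "A \<noteq> {}" using A(2) by auto
    then obtain p where p: "p \<in> A" by blast
    then obtain jp where jp: "jp \<in> {1..q}" "M p jp = d" using A(3) by (auto simp: ro_def)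
    have "d \<noteq> c"
    proof
      assume "d = c"
      then have "p \<in> {i,k}" using occ_rows[OF assms(6) ikS c, of p jp] jp p AS by auto
      then show False using p A(1) assms(14) by auto
    qed
    then have disj: "(\<exists>m\<in>{1..6}. d \<in> M m ` {1..q} \<and> c \<in> M m ` {1..q}) \<or>
        (\<exists>j\<in>{1..q}. d \<in> (\<lambda>i. M i j) ` {1..6} \<and> c \<in> (\<lambda>i. M i j) ` {1..6})"
      using M6(2)[rule_format, OF dC cC] by simp
    show "d \<in> (\<lambda>(p,j). M p j) ` (B \<times> {ji,jk})"
    proof (cases "\<exists>m\<in>{1..6}. d \<in> M m ` {1..q} \<and> c \<in> M m ` {1..q}")
      case True
      then obtain m j1 j2 where m: "m \<in> {1..6}" "j1 \<in> {1..q}" "M m j1 = d" "j2 \<in> {1..q}" "M m j2 = c"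
        by auto
      have "m \<in> A" using occ_rows[OF assms(6) AS A(3) m(1,2,3)] .
      moreover have "m \<in> {i,k}" using occ_rows[OF assms(6) ikS c m(1,4,5)] .
      ultimately show ?thesis using A(1) assms(14) by auto
    next
      case False
      then obtain j m1 m2 where m: "j \<in> {1..q}" "m1 \<in> {1..6}" "M m1 j = d" "m2 \<in> {1..6}" "M m2 j = c"
        using disj by auto
      have "m1 \<in> A" using occ_rows[OF assms(6) AS A(3) m(2,1,3)] .
      moreover have "m2 \<in> {i,k}" using occ_rows[OF assms(6) ikS c m(4,1,5)] .
      then have "j \<in> {ji,jk}"
      proof
        assume "m2 = i"
        then have "j = ji" using inj_onD[OF M6(1)[rule_format, OF assms(7)], of j ji] m(1,5) ji by simp
        then show ?thesis by simp
      next
        assume "m2 \<in> {k}"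
        then have "j = jk" using inj_onD[OF M6(1)[rule_format, OF assms(8)], of j jk] m(1,5) jk by simp
        then show ?thesis by simp
      qed
      ultimately have mj: "(m1, j) \<in> B \<times> {ji,jk}" using A(1) by auto
      show ?thesis by (rule rev_image_eqI[OF mj]) (simp add: m(3))
    qed
  qed
  have "r_star q C M B \<le> card (B \<times> {ji,jk})"
  proof -
    have f2: "finite (B \<times> {ji,jk})" using fB by simp
    have "card (ro_star q C M B) \<le> card ((\<lambda>(p,j). M p j) ` (B \<times> {ji,jk}))"
      using card_mono[OF _ sub] f2 by simp
    also have "\<dots> \<le> card (B \<times> {ji,jk})" using card_image_le[OF f2] .
    finally show ?thesis unfolding r_star_def .
  qed
  also have "\<dots> \<le> card B * 2" by (simp add: card_cartesian_product card_insert_le_m1)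
  finally show "r_star q C M B \<le> 2 * card B" by simp
qed

end
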